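(* Let $X$ be a Tychonoff space. The socle of $T''(X)$ consists exactly of those $f\in T''(X)$ for which $\{x\in X: f(x)\neq 0\}$ is finite.
   Context: $C(X)$ is the ring of real-valued continuous functions on $X$; a cozero set is a set $\{x: h(x)\neq 0\}$ with $h\in C(X)$. $T''(X)$ is the ring (under pointwise operations) of all functions $f\colon X\to\mathbb{R}$ for which there is a dense cozero set $U$ of $X$ with $f|_U$ continuous. The socle of a ring is the sum of its minimal ideals. *)

theory Defs
  imports "HOL-Analysis.Analysis" "HOL-Algebra.Ideal"
begin

definition tychonoff_space :: "'a topology \<Rightarrow> bool" where
  "tychonoff_space X \<longleftrightarrow> completely_regular_space X \<and> t1_space X"

definition cozero_set :: "'a topology \<Rightarrow> 'a set \<Rightarrow> bool" where
  "cozero_set X U \<longleftrightarrow>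
     (\<exists>h. continuous_map X euclideanreal h \<and> U = {x \<in> topspace X. h x \<noteq> 0})"

definition Tpp_carrier :: "'a topology \<Rightarrow> ('a \<Rightarrow> real) set" where
  "Tpp_carrier X = {f. (\<forall>x. x \<notin> topspace X \<longrightarrow> f x = 0) \<and>
      (\<exists>U. cozero_set X U \<and> X closure_of U = topspace X \<and>
           continuous_map (subtopology X U) euclideanreal f)}"

definition Tpp :: "'a topology \<Rightarrow> ('a \<Rightarrow> real) ring" where
  "Tpp X = \<lparr> carrier = Tpp_carrier X,
             mult = (\<lambda>f g x. f x * g x),
             one = (\<lambda>x. if x \<in> topspace X then 1 else 0),
             zero = (\<lambda>x. 0),
             add = (\<lambda>f g x. f x + g x) \<rparr>"

definition minimal_ideal :: "'b set \<Rightarrow> ('b, 'c) ring_scheme \<Rightarrow> bool" where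
  "minimal_ideal I R \<longleftrightarrow> ideal I R \<and> I \<noteq> {\<zero>\<^bsub>R\<^esub>} \<and>
     (\<forall>J. ideal J R \<and> J \<subseteq> I \<longrightarrow> J = {\<zero>\<^bsub>R\<^esub>} \<or> J = I)"

text \<open>Socle: sum of all minimal ideals, i.e. the ideal generated by their union.\<close>
definition socle :: "('b, 'c) ring_scheme \<Rightarrow> 'b set" where
  "socle R = genideal R (\<Union>{I. minimal_ideal I R})"

end

theory Submission
  imports Defs
begin

lemma cozero_openin: "cozero_set X U \<Longrightarrow> openin X U"
  unfolding cozero_set_def
proof (elim exE conjE)
  fix h assume h: "continuous_map X euclideanreal h" and U: "U = {x \<in> topspace X. h x \<noteq> 0}"
  have "openin X {x \<in> topspace X. h x \<in> - {0}}"
    using openin_continuous_map_preimage[OF h, of "- {0}"] by (simp add: open_Compl)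
  then show "openin X U" using U by simp
qed

lemma cozero_subset: "cozero_set X U \<Longrightarrow> U \<subseteq> topspace X"
  unfolding cozero_set_def by auto

lemma cozero_Int: "cozero_set X U \<Longrightarrow> cozero_set X V \<Longrightarrow> cozero_set X (U \<inter> V)"
  unfolding cozero_set_def
proof (elim exE conjE)
  fix h k assume h: "continuous_map X euclideanreal h" and U: "U = {x \<in> topspace X. h x \<noteq> 0}"
    and k: "continuous_map X euclideanreal k" and V: "V = {x \<in> topspace X. k x \<noteq> 0}"
  show "\<exists>h. continuous_map X euclideanreal h \<and> U \<inter> V = {x \<in> topspace X. h x \<noteq> 0}"
    by (rule exI[of _ "\<lambda>x. h x * k x"]) (auto simp: U V intro: continuous_map_real_mult h k)
qed

lemma cozero_top: "cozero_set X (topspace X)"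
  unfolding cozero_set_def by (rule exI[of _ "\<lambda>x. 1"]) auto

lemma dense_Int:
  assumes "cozero_set X U" "X closure_of U = topspace X" "X closure_of V = topspace X"
  shows "X closure_of (U \<inter> V) = topspace X"
proof -
  have "openin X U \<and> U \<subseteq> X closure_of V"
    using assms cozero_openin[OF assms(1)] cozero_subset[OF assms(1)] by auto
  then show ?thesis
    using closure_of_openin_Int_superset[of X U V] assms by auto
qed

lemma Tpp_carrier_iff: "f \<in> carrier (Tpp X) \<longleftrightarrow> (\<forall>x. x \<notin> topspace X \<longrightarrow> f x = 0) \<and>
      (\<exists>U. cozero_set X U \<and> X closure_of U = topspace X \<and>
           continuous_map (subtopology X U) euclideanreal f)"
  by (simp add: Tpp_def Tpp_carrier_def)

lemma Tpp_simps [simp]: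
  "f \<otimes>\<^bsub>Tpp X\<^esub> g = (\<lambda>x. f x * g x)"
  "f \<oplus>\<^bsub>Tpp X\<^esub> g = (\<lambda>x. f x + g x)"
  "\<one>\<^bsub>Tpp X\<^esub> = (\<lambda>x. if x \<in> topspace X then 1 else 0)"
  "\<zero>\<^bsub>Tpp X\<^esub> = (\<lambda>x. 0)"
  by (simp_all add: Tpp_def)

lemma Tpp_binop_closed:
  fixes f g :: "'a \<Rightarrow> real"
  assumes f: "f \<in> carrier (Tpp X)" and g: "g \<in> carrier (Tpp X)"
    and op0: "\<And>a b. a = 0 \<Longrightarrow> b = 0 \<Longrightarrow> op a b = 0"
    and opc: "\<And>Y (p::'a \<Rightarrow> real) q. continuous_map Y euclideanreal p \<Longrightarrow> continuous_map Y euclideanreal q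
               \<Longrightarrow> continuous_map Y euclideanreal (\<lambda>x. op (p x) (q x))"
  shows "(\<lambda>x. op (f x) (g x)) \<in> carrier (Tpp X)"
proof -
  obtain U where U: "cozero_set X U" "X closure_of U = topspace X"
    "continuous_map (subtopology X U) euclideanreal f" and f0: "\<And>x. x \<notin> topspace X \<Longrightarrow> f x = 0"
    using f by (auto simp: Tpp_carrier_iff)
  obtain V where V: "cozero_set X V" "X closure_of V = topspace X"
    "continuous_map (subtopology X V) euclideanreal g" and g0: "\<And>x. x \<notin> topspace X \<Longrightarrow> g x = 0"
    using g by (auto simp: Tpp_carrier_iff)
  have "continuous_map (subtopology X (U \<inter> V)) euclideanreal f"
    using U(3) continuous_map_from_subtopology_mono by blast
  moreover have "continuous_map (subtopology X (U \<inter> V)) euclideanreal g"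
    using V(3) continuous_map_from_subtopology_mono by blast
  ultimately have "continuous_map (subtopology X (U \<inter> V)) euclideanreal (\<lambda>x. op (f x) (g x))"
    by (rule opc)
  then show ?thesis unfolding Tpp_carrier_iff
    using f0 g0 op0 cozero_Int[OF U(1) V(1)] dense_Int[OF U(1,2) V(2)] by blast
qed

lemma Tpp_add_closed: "f \<in> carrier (Tpp X) \<Longrightarrow> g \<in> carrier (Tpp X) \<Longrightarrow> f \<oplus>\<^bsub>Tpp X\<^esub> g \<in> carrier (Tpp X)"
  using Tpp_binop_closed[of f X g "(+)"] continuous_map_add by auto

lemma Tpp_mult_closed: "f \<in> carrier (Tpp X) \<Longrightarrow> g \<in> carrier (Tpp X) \<Longrightarrow> f \<otimes>\<^bsub>Tpp X\<^esub> g \<in> carrier (Tpp X)"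
  using Tpp_binop_closed[of f X g "(*)"] continuous_map_real_mult by auto

lemma Tpp_neg_closed: "f \<in> carrier (Tpp X) \<Longrightarrow> (\<lambda>x. - f x) \<in> carrier (Tpp X)"
  using Tpp_binop_closed[of f X f "\<lambda>a b. - a"] continuous_map_minus by auto

lemma Tpp_cont_closed:
  assumes "continuous_map X euclideanreal f" "\<And>x. x \<notin> topspace X \<Longrightarrow> f x = 0"
  shows "f \<in> carrier (Tpp X)"
  unfolding Tpp_carrier_iff using assms cozero_top[of X]
  by (metis closure_of_topspace subtopology_topspace)

lemma Tpp_zero_closed: "(\<lambda>x. 0) \<in> carrier (Tpp X)"
  by (rule Tpp_cont_closed) auto

lemma Tpp_one_closed: "(\<lambda>x. if x \<in> topspace X then 1 else 0) \<in> carrier (Tpp X)"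
  by (rule Tpp_cont_closed) (auto intro: continuous_map_eq[OF continuous_map_const[THEN iffD2, of _ 1]])

lemma Tpp_const_closed: "(\<lambda>x. if x \<in> topspace X then c else 0) \<in> carrier (Tpp X)"
  by (rule Tpp_cont_closed) (auto intro: continuous_map_eq[OF continuous_map_const[THEN iffD2, of _ c]])

lemma Tpp_cring: "cring (Tpp X)"
proof (rule cringI)
  show "abelian_group (Tpp X)"
  proof (rule abelian_groupI)
    fix x assume x: "x \<in> carrier (Tpp X)"
    show "\<exists>y\<in>carrier (Tpp X). y \<oplus>\<^bsub>Tpp X\<^esub> x = \<zero>\<^bsub>Tpp X\<^esub>"
      using Tpp_neg_closed[OF x] by (intro bexI[of _ "\<lambda>y. - x y"]) auto
  qed (auto simp: Tpp_zero_closed intro: Tpp_add_closed[simplified])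
  show "comm_monoid (Tpp X)"
  proof (rule comm_monoidI)
    fix x assume x: "x \<in> carrier (Tpp X)"
    then show "\<one>\<^bsub>Tpp X\<^esub> \<otimes>\<^bsub>Tpp X\<^esub> x = x"
      by (auto simp: Tpp_carrier_iff)
  qed (auto simp: Tpp_one_closed intro: Tpp_mult_closed[simplified])
qed (auto simp: distrib_right)

lemma Tpp_a_inv: "f \<in> carrier (Tpp X) \<Longrightarrow> \<ominus>\<^bsub>Tpp X\<^esub> f = (\<lambda>x. - f x)"
proof -
  assume f: "f \<in> carrier (Tpp X)"
  interpret cring "Tpp X" by (rule Tpp_cring)
  show ?thesis
    by (rule minus_equality) (auto simp: f Tpp_neg_closed)
qed


lemma RHS_ideal:
  "ideal {f \<in> carrier (Tpp X). finite {x \<in> topspace X. f x \<noteq> 0}} (Tpp X)"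
proof -
  interpret cring "Tpp X" by (rule Tpp_cring)
  let ?I = "{f \<in> carrier (Tpp X). finite {x \<in> topspace X. f x \<noteq> 0}}"
  show ?thesis
  proof (rule idealI[OF ring_axioms])
    show "subgroup ?I (add_monoid (Tpp X))"
    proof (rule subgroup.intro)
      show "?I \<subseteq> carrier (add_monoid (Tpp X))" by auto
    next
      fix f g assume f: "f \<in> ?I" and g: "g \<in> ?I"
      have "{x \<in> topspace X. f x + g x \<noteq> 0} \<subseteq> {x \<in> topspace X. f x \<noteq> 0} \<union> {x \<in> topspace X. g x \<noteq> 0}"
        by auto
      then show "f \<otimes>\<^bsub>add_monoid (Tpp X)\<^esub> g \<in> ?I"
        using f g by (auto intro: finite_subset Tpp_add_closed[simplified])
    next
      show "\<one>\<^bsub>add_monoid (Tpp X)\<^esub> \<in> ?I" using Tpp_zero_closed by auto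
    next
      fix f assume f: "f \<in> ?I"
      have "inv\<^bsub>add_monoid (Tpp X)\<^esub> f = (\<lambda>x. - f x)"
        using Tpp_a_inv[of f X] f by (simp add: a_inv_def)
      then show "inv\<^bsub>add_monoid (Tpp X)\<^esub> f \<in> ?I" using f Tpp_neg_closed by auto
    qed
  next
    fix a x assume a: "a \<in> ?I" and x: "x \<in> carrier (Tpp X)"
    have "{y \<in> topspace X. x y * a y \<noteq> 0} \<subseteq> {y \<in> topspace X. a y \<noteq> 0}" by auto
    then show "x \<otimes>\<^bsub>Tpp X\<^esub> a \<in> ?I"
      using a x by (auto intro: finite_subset Tpp_mult_closed[simplified])
  next
    fix a x assume a: "a \<in> ?I" and x: "x \<in> carrier (Tpp X)"
    have "{y \<in> topspace X. a y * x y \<noteq> 0} \<subseteq> {y \<in> topspace X. a y \<noteq> 0}" by auto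
    then show "a \<otimes>\<^bsub>Tpp X\<^esub> x \<in> ?I"
      using a x by (auto intro: finite_subset Tpp_mult_closed[simplified])
  qed
qed

lemma point_in_carrier:
  assumes t1: "t1_space X" and f: "f \<in> carrier (Tpp X)" and fin: "finite {x \<in> topspace X. f x \<noteq> 0}"
    and x: "x \<in> topspace X" and fx: "f x \<noteq> 0"
  shows "(\<lambda>y. if y = x then 1 else 0) \<in> carrier (Tpp X)"
proof -
  obtain U where U: "cozero_set X U" "X closure_of U = topspace X"
    "continuous_map (subtopology X U) euclideanreal f"
    using f by (auto simp: Tpp_carrier_iff)
  show ?thesis
  proof (cases "x \<in> U")
    case False
    have "continuous_map (subtopology X U) euclideanreal (\<lambda>y. (0::real))" by simp
    then have "continuous_map (subtopology X U) euclideanreal (\<lambda>y. if y = x then 1 else 0)"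
      by (rule continuous_map_eq) (auto simp: False)
    then show ?thesis unfolding Tpp_carrier_iff using U x by auto
  next
    case True
    let ?S = "{y \<in> topspace (subtopology X U). f y \<in> - {0}}"
    have "openin (subtopology X U) ?S"
      using openin_continuous_map_preimage[OF U(3), of "- {0}"] by (simp add: open_Compl)
    then have S: "openin X ?S" using openin_trans_full cozero_openin[OF U(1)] by blast
    have fin2: "finite (?S - {x})" using fin by (rule finite_subset[rotated]) auto
    have "closedin X (?S - {x})" using t1 fin2 by (auto simp: t1_space_closedin_finite)
    then have "openin X (?S - (?S - {x}))" using S by blast
    moreover have "?S - (?S - {x}) = {x}" using True x fx by auto
    ultimately have op: "openin X {x}" by simp
    have cl: "closedin X {x}" using t1 x by (simp add: closedin_t1_singleton)
    have fr: "X frontier_of {x} = {}" using op cl x by (simp add: frontier_of_eq_empty)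
    have "continuous_map X euclideanreal (\<lambda>y. if y = x then 1 else 0)"
      by (rule continuous_map_cases[where P="\<lambda>y. y = x"]) (use fr in auto)
    then show ?thesis by (rule Tpp_cont_closed) (use x in auto)
  qed
qed

lemma point_minimal:
  assumes e: "e \<in> carrier (Tpp X)" and edef: "e = (\<lambda>y. if y = x then 1 else 0)"
    and x: "x \<in> topspace X"
  shows "minimal_ideal (PIdl\<^bsub>Tpp X\<^esub> e) (Tpp X)"
proof -
  interpret cring "Tpp X" by (rule Tpp_cring)
  have I: "ideal (PIdl\<^bsub>Tpp X\<^esub> e) (Tpp X)" by (rule cgenideal_ideal[OF e])
  have eI: "e \<in> PIdl\<^bsub>Tpp X\<^esub> e" by (rule cgenideal_self[OF e])
  have "e x = 1" using edef by simp
  then have ne: "e \<noteq> \<zero>\<^bsub>Tpp X\<^esub>" by auto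
  show ?thesis unfolding minimal_ideal_def
  proof (intro conjI allI impI)
    show "ideal (PIdl\<^bsub>Tpp X\<^esub> e) (Tpp X)" by (rule I)
    show "PIdl\<^bsub>Tpp X\<^esub> e \<noteq> {\<zero>\<^bsub>Tpp X\<^esub>}" using eI ne by auto
    fix J assume J: "ideal J (Tpp X) \<and> J \<subseteq> PIdl\<^bsub>Tpp X\<^esub> e"
    then have Jid: "ideal J (Tpp X)" and Jsub: "J \<subseteq> PIdl\<^bsub>Tpp X\<^esub> e" by auto
    show "J = {\<zero>\<^bsub>Tpp X\<^esub>} \<or> J = PIdl\<^bsub>Tpp X\<^esub> e"
    proof (cases "J = {\<zero>\<^bsub>Tpp X\<^esub>}")
      case False
      have "\<zero>\<^bsub>Tpp X\<^esub> \<in> J" by (rule additive_subgroup.zero_closed[OF ideal.axioms(1)[OF Jid]])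
      then obtain j where j: "j \<in> J" "j \<noteq> \<zero>\<^bsub>Tpp X\<^esub>" using False by blast
      have "j \<in> PIdl\<^bsub>Tpp X\<^esub> e" using j(1) Jsub by (rule subsetD[rotated])
      then obtain h where h: "h \<in> carrier (Tpp X)" "j = h \<otimes>\<^bsub>Tpp X\<^esub> e"
        unfolding cgenideal_def by blast
      have jeq: "j = (\<lambda>y. h x * e y)"
        by (rule ext) (simp add: h(2) edef)
      have hx: "h x \<noteq> 0" using j(2) jeq by auto
      define c where "c = (\<lambda>y. if y \<in> topspace X then 1 / h x else 0)"
      have cc: "c \<in> carrier (Tpp X)" unfolding c_def by (rule Tpp_const_closed)
      have "c \<otimes>\<^bsub>Tpp X\<^esub> j \<in> J" by (rule ideal.I_l_closed[OF Jid j(1) cc])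
      moreover have "c \<otimes>\<^bsub>Tpp X\<^esub> j = e"
        by (rule ext) (simp add: jeq hx edef x c_def)
      ultimately have "e \<in> J" by simp
      then have "PIdl\<^bsub>Tpp X\<^esub> e \<subseteq> J" by (rule cgenideal_minimal[OF Jid])
      then show ?thesis using Jsub by blast
    qed simp
  qed
qed

lemma all_eq_finite: "(\<forall>a\<in>S. \<forall>b\<in>S. a = b) \<Longrightarrow> finite S"
proof (cases "S = {}")
  case False
  assume h: "\<forall>a\<in>S. \<forall>b\<in>S. a = b"
  from False obtain a where "a \<in> S" by auto
  then have "S \<subseteq> {a}" using h by auto
  then show ?thesis using finite_subset by blast
qed simp

lemma minimal_sub:
  assumes ty: "tychonoff_space X" and I: "minimal_ideal I (Tpp X)" and f: "f \<in> I"
  shows "f \<in> carrier (Tpp X) \<and> finite {x \<in> topspace X. f x \<noteq> 0}"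
proof -
  interpret cring "Tpp X" by (rule Tpp_cring)
  have Iid: "ideal I (Tpp X)" and Imin: "\<And>J. ideal J (Tpp X) \<Longrightarrow> J \<subseteq> I \<Longrightarrow> J = {\<zero>\<^bsub>Tpp X\<^esub>} \<or> J = I"
    using I unfolding minimal_ideal_def by blast+
  have fc: "f \<in> carrier (Tpp X)" by (rule ideal.Icarr[OF Iid f])
  have crs: "completely_regular_space X" and t1: "t1_space X"
    using ty unfolding tychonoff_space_def by auto
  have "\<forall>a\<in>{x \<in> topspace X. f x \<noteq> 0}. \<forall>b\<in>{x \<in> topspace X. f x \<noteq> 0}. a = b"
  proof (intro ballI, rule ccontr)
    fix a b assume a: "a \<in> {x \<in> topspace X. f x \<noteq> 0}" and b: "b \<in> {x \<in> topspace X. f x \<noteq> 0}"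
      and ab: "a \<noteq> b"
    have cb: "closedin X {b}" using b by (intro closedin_t1_singleton[OF t1]) simp
    have "a \<in> topspace X - {b}" using a ab by simp
    then have "\<exists>g::'a\<Rightarrow>real. continuous_map X (top_of_set {0..1}) g \<and> g a = 0 \<and> g ` {b} \<subseteq> {1}"
      using crs cb unfolding completely_regular_space_def by blast
    then obtain g :: "'a \<Rightarrow> real" where g: "continuous_map X (top_of_set {0..1}) g" "g a = 0" "g ` {b} \<subseteq> {1}"
      by blast
    define g' where "g' = (\<lambda>z. if z \<in> topspace X then g z else 0)"
    have gc: "continuous_map X euclideanreal g"
      using g(1) by (simp add: continuous_map_in_subtopology)
    have "continuous_map X euclideanreal g'"
      by (rule continuous_map_eq[OF gc]) (simp add: g'_def)
    then have g'c: "g' \<in> carrier (Tpp X)" by (rule Tpp_cont_closed) (simp add: g'_def)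
    define k where "k = f \<otimes>\<^bsub>Tpp X\<^esub> g'"
    have kI: "k \<in> I" unfolding k_def by (rule ideal.I_r_closed[OF Iid f g'c])
    have kc: "k \<in> carrier (Tpp X)" by (rule ideal.Icarr[OF Iid kI])
    have J: "ideal (PIdl\<^bsub>Tpp X\<^esub> k) (Tpp X)" by (rule cgenideal_ideal[OF kc])
    have JI: "PIdl\<^bsub>Tpp X\<^esub> k \<subseteq> I" by (rule cgenideal_minimal[OF Iid kI])
    have kk: "k \<in> PIdl\<^bsub>Tpp X\<^esub> k" by (rule cgenideal_self[OF kc])
    have "k b \<noteq> 0" using b g(3) by (simp add: k_def g'_def)
    then have "k \<noteq> \<zero>\<^bsub>Tpp X\<^esub>" by auto
    then have "PIdl\<^bsub>Tpp X\<^esub> k \<noteq> {\<zero>\<^bsub>Tpp X\<^esub>}" using kk by blast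
    then have "PIdl\<^bsub>Tpp X\<^esub> k = I" using Imin[OF J JI] by blast
    then have "f \<in> PIdl\<^bsub>Tpp X\<^esub> k" using f by simp
    then obtain h where "h \<in> carrier (Tpp X)" and hf: "f = h \<otimes>\<^bsub>Tpp X\<^esub> k"
      unfolding cgenideal_def by blast
    have "f a = (h \<otimes>\<^bsub>Tpp X\<^esub> k) a" using hf by simp
    also have "\<dots> = h a * (f a * g' a)" by (simp add: k_def)
    also have "\<dots> = 0" using g(2) a by (simp add: g'_def)
    finally show False using a by simp
  qed
  then have "finite {x \<in> topspace X. f x \<noteq> 0}" by (rule all_eq_finite)
  then show ?thesis using fc by simp
qed

lemma union_carrier: "\<Union>{I. minimal_ideal I (Tpp X)} \<subseteq> carrier (Tpp X)"
proof
  fix f assume "f \<in> \<Union>{I. minimal_ideal I (Tpp X)}"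
  then obtain I where I: "minimal_ideal I (Tpp X)" and f: "f \<in> I" by blast
  have "ideal I (Tpp X)" using I unfolding minimal_ideal_def by (rule conjunct1)
  then show "f \<in> carrier (Tpp X)" using f by (rule ideal.Icarr)
qed

lemma socle_ideal: "ideal (socle (Tpp X)) (Tpp X)"
proof -
  interpret cring "Tpp X" by (rule Tpp_cring)
  show ?thesis unfolding socle_def by (rule genideal_ideal[OF union_carrier])
qed

lemma minimal_in_socle: "minimal_ideal I (Tpp X) \<Longrightarrow> I \<subseteq> socle (Tpp X)"
proof -
  interpret cring "Tpp X" by (rule Tpp_cring)
  assume I: "minimal_ideal I (Tpp X)"
  have "I \<subseteq> \<Union>{I. minimal_ideal I (Tpp X)}" using I by blast
  also have "\<dots> \<subseteq> socle (Tpp X)" unfolding socle_def by (rule genideal_self[OF union_carrier])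
  finally show ?thesis .
qed

lemma fin_in_socle:
  assumes ty: "tychonoff_space X"
  shows "f \<in> carrier (Tpp X) \<Longrightarrow> finite {x \<in> topspace X. f x \<noteq> 0} \<Longrightarrow> f \<in> socle (Tpp X)"
proof (induction "card {x \<in> topspace X. f x \<noteq> 0}" arbitrary: f)
  case 0
  have "f = (\<lambda>x. 0)"
  proof
    fix y show "f y = 0"
      using 0 by (cases "y \<in> topspace X") (auto simp: Tpp_carrier_iff)
  qed
  then show ?case
    using additive_subgroup.zero_closed[OF ideal.axioms(1)[OF socle_ideal[of X]]] by simp
next
  case (Suc n)
  interpret cring "Tpp X" by (rule Tpp_cring)
  have t1: "t1_space X" using ty by (simp add: tychonoff_space_def)
  have "{x \<in> topspace X. f x \<noteq> 0} \<noteq> {}" using Suc(2) by (metis card.empty nat.distinct(1))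
  then obtain x where x: "x \<in> topspace X" "f x \<noteq> 0" by blast
  define e where "e = (\<lambda>y. if y = x then 1 else (0::real))"
  have ec: "e \<in> carrier (Tpp X)" unfolding e_def by (rule point_in_carrier[OF t1 Suc(3,4) x])
  have fec: "f \<otimes>\<^bsub>Tpp X\<^esub> e \<in> carrier (Tpp X)" by (rule Tpp_mult_closed[OF Suc(3) ec])
  define g where "g = f \<oplus>\<^bsub>Tpp X\<^esub> (\<ominus>\<^bsub>Tpp X\<^esub> (f \<otimes>\<^bsub>Tpp X\<^esub> e))"
  have gc: "g \<in> carrier (Tpp X)" unfolding g_def
    by (rule Tpp_add_closed[OF Suc(3)]) (simp only: Tpp_a_inv[OF fec] Tpp_neg_closed[OF fec])
  have geq: "g = (\<lambda>y. if y = x then 0 else f y)"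
    unfolding g_def using Tpp_a_inv[OF fec] by (auto simp: e_def)
  have supp: "{y \<in> topspace X. g y \<noteq> 0} = {y \<in> topspace X. f y \<noteq> 0} - {x}"
    by (auto simp: geq)
  have fin: "finite {y \<in> topspace X. g y \<noteq> 0}" using Suc(4) supp by simp
  have "n = card {y \<in> topspace X. g y \<noteq> 0}" using Suc(2,4) supp x by simp
  then have gS: "g \<in> socle (Tpp X)" by (rule Suc(1)[OF _ gc fin])
  have "f \<otimes>\<^bsub>Tpp X\<^esub> e \<in> PIdl\<^bsub>Tpp X\<^esub> e" unfolding cgenideal_def using Suc(3) by blast
  moreover have "minimal_ideal (PIdl\<^bsub>Tpp X\<^esub> e) (Tpp X)"
    by (rule point_minimal[OF ec e_def x(1)])
  ultimately have feS: "f \<otimes>\<^bsub>Tpp X\<^esub> e \<in> socle (Tpp X)"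
    using minimal_in_socle[of "PIdl\<^bsub>Tpp X\<^esub> e" X] by (simp add: subset_iff)
  have "g \<oplus>\<^bsub>Tpp X\<^esub> (f \<otimes>\<^bsub>Tpp X\<^esub> e) \<in> socle (Tpp X)"
    using additive_subgroup.a_closed[OF ideal.axioms(1)[OF socle_ideal[of X]] gS feS] .
  moreover have "g \<oplus>\<^bsub>Tpp X\<^esub> (f \<otimes>\<^bsub>Tpp X\<^esub> e) = f" by (auto simp: geq e_def)
  ultimately show ?case by simp
qed

theorem theorem5p2:
  fixes X :: "'a topology"
  assumes "tychonoff_space X"
  shows "socle (Tpp X) = {f \<in> carrier (Tpp X). finite {x \<in> topspace X. f x \<noteq> 0}}"
proof
  interpret cring "Tpp X" by (rule Tpp_cring)
  show "socle (Tpp X) \<subseteq> {f \<in> carrier (Tpp X). finite {x \<in> topspace X. f x \<noteq> 0}}"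
    unfolding socle_def
  proof (rule genideal_minimal[OF RHS_ideal], rule subsetI)
    fix f assume "f \<in> \<Union>{I. minimal_ideal I (Tpp X)}"
    then obtain I where I: "minimal_ideal I (Tpp X)" and f: "f \<in> I" by blast
    show "f \<in> {f \<in> carrier (Tpp X). finite {x \<in> topspace X. f x \<noteq> 0}}"
      using minimal_sub[OF assms I f] by simp
  qed
  show "{f \<in> carrier (Tpp X). finite {x \<in> topspace X. f x \<noteq> 0}} \<subseteq> socle (Tpp X)"
    using fin_in_socle[OF assms] by (simp add: subset_iff)
qed

end
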